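(* Let $M$ be a power-associative magma (finite or infinite). Then the undirected power graph $P(M)$ is perfect: every finite induced subgraph of $P(M)$ has clique number equal to its chromatic number. In particular, the power graph of any group contains no induced cycle $C_n$ with $n$ odd, $n\ge 5$, and no induced complement of such a cycle.
   Context: A power-associative magma is a set with a binary operation such that the associative law holds for products of powers of a single element, so that positive powers $x^n$ are unambiguously defined. The (undirected) power graph $P(M)$ has vertex set $M$, with distinct $u,v$ adjacent if and only if $v=u^i$ or $u=v^j$ for some positive integers $i,j$. An infinite graph is called perfect if every finite induced subgraph has clique number equal to chromatic number. *)

theory Defs
  imports Main
begin

text \<open>Magma: a type 'a with a binary operation mult. Positive powers:
  mpow mult x n = x^(n+1), i.e. x^1 = x and x^(k+1) = x^k * x.\<close>
fun mpow :: "('a \<Rightarrow> 'a \<Rightarrow> 'a) \<Rightarrow> 'a \<Rightarrow> nat \<Rightarrow> 'a" where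
  "mpow mult x 0 = x"
| "mpow mult x (Suc n) = mult (mpow mult x n) x"

text \<open>Positive power x^n for n \<ge> 1 (value at n = 0 irrelevant).\<close>
definition ppow :: "('a \<Rightarrow> 'a \<Rightarrow> 'a) \<Rightarrow> 'a \<Rightarrow> nat \<Rightarrow> 'a" where
  "ppow mult x n = mpow mult x (n - 1)"

definition power_associative :: "('a \<Rightarrow> 'a \<Rightarrow> 'a) \<Rightarrow> bool" where
  "power_associative mult \<longleftrightarrow>
     (\<forall>x m n. m \<ge> 1 \<longrightarrow> n \<ge> 1 \<longrightarrow> mult (ppow mult x m) (ppow mult x n) = ppow mult x (m + n))"

definition power_adj :: "('a \<Rightarrow> 'a \<Rightarrow> 'a) \<Rightarrow> 'a \<Rightarrow> 'a \<Rightarrow> bool" where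
  "power_adj mult u v \<longleftrightarrow> u \<noteq> v \<and>
     ((\<exists>i\<ge>1. v = ppow mult u i) \<or> (\<exists>j\<ge>1. u = ppow mult v j))"

definition is_clique :: "('a \<Rightarrow> 'a \<Rightarrow> bool) \<Rightarrow> 'a set \<Rightarrow> bool" where
  "is_clique adj K \<longleftrightarrow> (\<forall>u\<in>K. \<forall>v\<in>K. u \<noteq> v \<longrightarrow> adj u v)"

definition clique_number :: "('a \<Rightarrow> 'a \<Rightarrow> bool) \<Rightarrow> 'a set \<Rightarrow> nat" where
  "clique_number adj S = Max {card K | K. K \<subseteq> S \<and> is_clique adj K}"

definition proper_colouring :: "('a \<Rightarrow> 'a \<Rightarrow> bool) \<Rightarrow> 'a set \<Rightarrow> nat \<Rightarrow> ('a \<Rightarrow> nat) \<Rightarrow> bool" where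
  "proper_colouring adj S k c \<longleftrightarrow>
     (\<forall>v\<in>S. c v < k) \<and> (\<forall>u\<in>S. \<forall>v\<in>S. adj u v \<longrightarrow> c u \<noteq> c v)"

definition chromatic_number :: "('a \<Rightarrow> 'a \<Rightarrow> bool) \<Rightarrow> 'a set \<Rightarrow> nat" where
  "chromatic_number adj S = (LEAST k. \<exists>c. proper_colouring adj S k c)"

definition perfect_graph :: "('a \<Rightarrow> 'a \<Rightarrow> bool) \<Rightarrow> bool" where
  "perfect_graph adj \<longleftrightarrow>
     (\<forall>S. finite S \<longrightarrow> clique_number adj S = chromatic_number adj S)"

end

theory Submission
  imports Defs
begin

lemma ppow_1[simp]: "ppow m y (Suc 0) = y"
  by (simp add: ppow_def)

lemma ppow_Suc: "n \<ge> 1 \<Longrightarrow> ppow m y (Suc n) = m (ppow m y n) y"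
  by (cases n) (auto simp: ppow_def)

lemma ppow_ppow:
  assumes PA: "power_associative mult" and i: "i \<ge> 1" and j: "j \<ge> 1"
  shows "ppow mult (ppow mult x i) j = ppow mult x (i*j)"
  using j
proof (induction j rule: nat_induct_at_least)
  case base then show ?case by simp
next
  case (Suc n)
  have "ppow mult (ppow mult x i) (Suc n) = mult (ppow mult x (i*n)) (ppow mult x i)"
    using Suc by (simp add: ppow_Suc)
  also have "\<dots> = ppow mult x (i*n + i)"
    using PA i Suc(1) unfolding power_associative_def by simp
  finally show ?case by (simp add: add.commute)
qed

definition pw :: "('a \<Rightarrow> 'a \<Rightarrow> 'a) \<Rightarrow> 'a \<Rightarrow> 'a \<Rightarrow> bool" where
  "pw mult u v \<longleftrightarrow> (\<exists>i\<ge>1. v = ppow mult u i)"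

lemma pw_trans:
  assumes PA: "power_associative mult" and "pw mult u v" "pw mult v w"
  shows "pw mult u w"
proof -
  obtain i where i: "i \<ge> 1" "v = ppow mult u i" using assms(2) pw_def by metis
  obtain j where j: "j \<ge> 1" "w = ppow mult v j" using assms(3) pw_def by metis
  have "w = ppow mult u (i*j)" using ppow_ppow[OF PA i(1) j(1)] i j by simp
  moreover have "i*j \<ge> 1" using i j by simp
  ultimately show ?thesis unfolding pw_def by blast
qed

lemma adj_pw: "power_adj mult u v \<longleftrightarrow> u \<noteq> v \<and> (pw mult u v \<or> pw mult v u)"
  unfolding power_adj_def pw_def by blast

lemma clique_le_colours:
  assumes "finite S" "proper_colouring adj S k c"
  shows "clique_number adj S \<le> k"
proof -
  let ?A = "{card K | K. K \<subseteq> S \<and> is_clique adj K}"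
  have fin: "finite ?A"
  proof (rule finite_subset[of _ "{..card S}"])
    show "?A \<subseteq> {..card S}" using assms(1) by (auto intro: card_mono)
  qed simp
  have ne: "?A \<noteq> {}" by (auto simp: is_clique_def intro!: exI[of _ "{}"])
  have "Max ?A \<in> ?A" using Max_in[OF fin ne] .
  then obtain K where K: "K \<subseteq> S" "is_clique adj K" "clique_number adj S = card K"
    unfolding clique_number_def by blast
  have "inj_on c K" using K assms(2)
    unfolding inj_on_def proper_colouring_def is_clique_def by blast
  moreover have "c ` K \<subseteq> {..<k}" using K assms(2) unfolding proper_colouring_def by auto
  ultimately have "card K \<le> card {..<k}"
    by (metis card_image card_mono finite_lessThan)
  then show ?thesis using K by simp
qed

lemma clique_ge:
  assumes "finite S" "C \<subseteq> S" "is_clique adj C"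
  shows "card C \<le> clique_number adj S"
proof -
  let ?A = "{card K | K. K \<subseteq> S \<and> is_clique adj K}"
  have fin: "finite ?A"
  proof (rule finite_subset[of _ "{..card S}"])
    show "?A \<subseteq> {..card S}" using assms(1) by (auto intro: card_mono)
  qed simp
  show ?thesis unfolding clique_number_def using assms by (intro Max_ge[OF fin]) blast
qed

lemma colouring_exists:
  assumes PA: "power_associative mult" and fS: "finite S"
  shows "\<exists>c. proper_colouring (power_adj mult) S (clique_number (power_adj mult) S) c"
proof -
  obtain r :: "'a \<Rightarrow> nat" and n where r: "inj_on r S"
    using finite_imp_inj_to_nat_seg[OF fS] by blast
  define lt where "lt u v \<longleftrightarrow> u \<noteq> v \<and> pw mult u v \<and> (\<not> pw mult v u \<or> r u < r v)" for u v
  have lt_trans: "lt u w" if "lt u v" "lt v w" for u v w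
  proof -
    have uv: "pw mult u v" and vw: "pw mult v w" using that lt_def by auto
    have uw: "pw mult u w" using pw_trans[OF PA uv vw] .
    have nu: "u \<noteq> w"
    proof
      assume "u = w"
      then have "pw mult v u" using vw by simp
      then show False using that uv \<open>u = w\<close> unfolding lt_def by auto
    qed
    show ?thesis
    proof (cases "pw mult w u")
      case True
      have "pw mult v u" using pw_trans[OF PA vw True] .
      moreover have "pw mult w v" using pw_trans[OF PA True uv] .
      ultimately have "r u < r v" "r v < r w" using that unfolding lt_def by auto
      then show ?thesis using nu uw unfolding lt_def by auto
    qed (use nu uw lt_def in auto)
  qed
  have lt_irr: "\<not> lt u u" for u unfolding lt_def by simp
  have lt_adj: "power_adj mult u v" if "lt u v" for u v
    using that unfolding lt_def adj_pw by auto
  have adj_lt: "lt u v \<or> lt v u" if "power_adj mult u v" "u \<in> S" "v \<in> S" for u v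
  proof -
    have "r u \<noteq> r v" using r that unfolding adj_pw inj_on_def by blast
    then show ?thesis using that unfolding adj_pw lt_def by auto
  qed
  define chain where "chain C \<longleftrightarrow> (\<forall>x\<in>C. \<forall>y\<in>C. x \<noteq> y \<longrightarrow> lt x y \<or> lt y x)" for C
  define Cs where "Cs v = {C. C \<subseteq> S \<and> chain C \<and> v \<in> C \<and> (\<forall>x\<in>C. x = v \<or> lt x v)}" for v
  define h where "h v = Max (card ` Cs v)" for v
  have finCs: "finite (card ` Cs v)" for v
    by (rule finite_imageI, rule finite_subset[of _ "Pow S"]) (auto simp: Cs_def fS)
  have neCs: "v \<in> S \<Longrightarrow> {v} \<in> Cs v" for v by (auto simp: Cs_def chain_def)
  have hC: "v \<in> S \<Longrightarrow> \<exists>C\<in>Cs v. h v = card C" for v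
    using Max_in[OF finCs, of v] neCs[of v] unfolding h_def by auto
  have h_pos: "v \<in> S \<Longrightarrow> h v \<ge> 1" for v
  proof -
    assume "v \<in> S"
    then have "card {v} \<in> card ` Cs v" using neCs[of v] by blast
    then show ?thesis using Max_ge[OF finCs] unfolding h_def by fastforce
  qed
  have chain_clique: "chain C \<Longrightarrow> is_clique (power_adj mult) C" for C
    unfolding chain_def is_clique_def using lt_adj adj_pw by metis
  have h_le: "v \<in> S \<Longrightarrow> h v \<le> clique_number (power_adj mult) S" for v
    using hC[of v] clique_ge[OF fS] chain_clique unfolding Cs_def by force
  have h_mono: "h u < h v" if "lt u v" "u \<in> S" "v \<in> S" for u v
  proof -
    note th = that
    obtain C where C: "C \<in> Cs u" "h u = card C" using hC[OF th(2)] by blast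
    have vC: "v \<notin> C"
    proof
      assume "v \<in> C"
      then have "v = u \<or> lt v u" using C(1) unfolding Cs_def by blast
      then show False using th(1) lt_irr lt_trans by metis
    qed
    have fC: "finite C" using C(1) fS finite_subset unfolding Cs_def by blast
    have "insert v C \<in> Cs v"
    proof -
      have x: "\<forall>x\<in>C. lt x v" using C(1) th(1) lt_trans unfolding Cs_def by (metis (mono_tags, lifting) mem_Collect_eq)
      show ?thesis using C(1) th x unfolding Cs_def chain_def by auto
    qed
    then have "card (insert v C) \<le> h v" unfolding h_def using Max_ge[OF finCs] by blast
    then show ?thesis using C vC fC by simp
  qed
  define c where "c v = h v - 1" for v
  have "proper_colouring (power_adj mult) S (clique_number (power_adj mult) S) c"
    unfolding proper_colouring_def
  proof (intro conjI ballI impI)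
    fix v assume "v \<in> S"
    then show "c v < clique_number (power_adj mult) S"
      using h_le h_pos unfolding c_def by (meson diff_less le_trans less_le_trans zero_less_one)
  next
    fix u v assume "u \<in> S" "v \<in> S" "power_adj mult u v"
    then have "h u \<noteq> h v" using adj_lt h_mono by (metis less_irrefl)
    moreover have "h u \<ge> 1" "h v \<ge> 1" using h_pos \<open>u \<in> S\<close> \<open>v \<in> S\<close> by auto
    ultimately show "c u \<noteq> c v" unfolding c_def by linarith
  qed
  then show ?thesis by blast
qed

theorem mainTheorem3:
  fixes mult :: "'a \<Rightarrow> 'a \<Rightarrow> 'a"
  assumes "power_associative mult"
  shows "perfect_graph (power_adj mult)"
  unfolding perfect_graph_def
proof (intro allI impI)
  fix S :: "'a set" assume fS: "finite S"
  obtain c where c: "proper_colouring (power_adj mult) S (clique_number (power_adj mult) S) c"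
    using colouring_exists[OF assms fS] by blast
  show "clique_number (power_adj mult) S = chromatic_number (power_adj mult) S"
    unfolding chromatic_number_def
    by (rule Least_equality[symmetric]) (use c clique_le_colours[OF fS] in blast)+
qed

end
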